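(* Let $1\le k<r$ and let $T_k$ be a single-vertex-bag weighted threshold matrix on $v_k,\dots,v_r$ with vertex weights $p^{(k)}_i$ ($k\le i\le r$) and edge weights $\epsilon^{(k)}_{i,j}$ ($k\le i<j\le r$, $j$ even). Set $\epsilon^{(k)}_{k,k+1}=0$ if $k+1$ is odd. Suppose that $p^{(k)}_k=p^{(k)}_{k+1}$ and $\epsilon^{(k)}_{k,j}=\epsilon^{(k)}_{k+1,j}$ for every even $j$ with $k+1<j\le r$. Let $T_{k+1}$ be the single-vertex-bag weighted threshold matrix on $v_{k+1},\dots,v_r$ with (a) $p^{(k+1)}_i=p^{(k)}_i$ for $k+2\le i\le r$; (b) $p^{(k+1)}_{k+1}=p^{(k)}_k+\epsilon^{(k)}_{k,k+1}$; (c) $\epsilon^{(k+1)}_{i,j}=\epsilon^{(k)}_{i,j}$ for $k+1<i<j\le r$, $j$ even; (d) $\epsilon^{(k+1)}_{k+1,j}=\sqrt2\,\epsilon^{(k)}_{k+1,j}$ for $k+1<j\le r$, $j$ even. Then, as multisets, $\mathrm{Spec}(T_k)=\mathrm{Spec}(T_{k+1})\cup\{p^{(k)}_k-\epsilon^{(k)}_{k,k+1}\}$.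
   Context: A single-vertex-bag weighted threshold matrix on $v_k,\dots,v_r$ is the real symmetric matrix indexed by $v_k,\dots,v_r$ with diagonal entries $p_i$ (the vertex weights) and, for $i<j$, entry $\epsilon_{i,j}\ne 0$ at positions $(v_i,v_j),(v_j,v_i)$ if $j$ is even and entry $0$ if $j$ is odd (so $v_i$ and $v_j$, $i<j$, are adjacent iff $j$ is even; this is a threshold graph whose bags are singletons, the bag of index $i$ being a union-bag for $i$ odd and a join-bag for $i$ even). $\mathrm{Spec}$ denotes the multiset of eigenvalues, and $\cup$ of multisets adds multiplicities. *)

theory Defs
  imports "Jordan_Normal_Form.Char_Poly" "HOL-Computational_Algebra.Polynomial"
begin

(* Row/column index a (0 <= a <= r-k) corresponds to vertex v_(k+a). *)
definition sv_threshold_mat :: "nat \<Rightarrow> nat \<Rightarrow> (nat \<Rightarrow> real) \<Rightarrow> (nat \<Rightarrow> nat \<Rightarrow> real) \<Rightarrow> real mat" where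
  "sv_threshold_mat k r p eps = mat (r + 1 - k) (r + 1 - k) (\<lambda>(a, b).
      let i = k + a; j = k + b in
      if i = j then p i
      else if even (max i j) then eps (min i j) (max i j) else 0)"

definition sv_threshold_weights :: "nat \<Rightarrow> nat \<Rightarrow> (nat \<Rightarrow> nat \<Rightarrow> real) \<Rightarrow> bool" where
  "sv_threshold_weights k r eps \<longleftrightarrow> (\<forall>i j. k \<le> i \<and> i < j \<and> j \<le> r \<and> even j \<longrightarrow> eps i j \<noteq> 0)"

definition Spec :: "real mat \<Rightarrow> complex multiset" where
  "Spec A = proots (char_poly (map_mat complex_of_real A))"

end

theory Submission
  imports Defs
begin

lemma sum_split2: "2 \<le> (n::nat) \<Longrightarrow> (\<Sum>c\<in>{0..<n}. f c) = f 0 + f 1 + (\<Sum>c\<in>{2..<n}. f c)"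
proof -
  assume "2 \<le> n"
  hence "{0..<n} = insert 0 (insert 1 {2..<n})" by auto
  thus ?thesis by (simp add: add.assoc)
qed

lemma mult_delta_right:
  fixes X Y :: "'a::comm_ring_1 mat"
  assumes X: "X \<in> carrier_mat n n" and Y: "Y \<in> carrier_mat n n" and n2: "2 \<le> n"
    and d: "\<And>c b. 2 \<le> c \<Longrightarrow> c < n \<Longrightarrow> b < n \<Longrightarrow> Y $$ (c,b) = (if c = b then 1 else 0)"
    and ab: "a < n" "b < n"
  shows "(X*Y)$$(a,b) = X$$(a,0)*Y$$(0,b) + X$$(a,1)*Y$$(1,b) + (if 2 \<le> b then X$$(a,b) else 0)"
proof -
  have "(X*Y)$$(a,b) = (\<Sum>c\<in>{0..<n}. X$$(a,c) * Y$$(c,b))"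
    using X Y ab by (simp add: index_mult_mat scalar_prod_def)
  also have "\<dots> = X$$(a,0)*Y$$(0,b) + X$$(a,1)*Y$$(1,b) + (\<Sum>c\<in>{2..<n}. X$$(a,c) * Y$$(c,b))"
    by (rule sum_split2[OF n2])
  also have "(\<Sum>c\<in>{2..<n}. X$$(a,c) * Y$$(c,b)) = (\<Sum>c\<in>{2..<n}. if b = c then X$$(a,c) else 0)"
    by (rule sum.cong, auto simp: d ab)
  also have "\<dots> = (if 2 \<le> b then X$$(a,b) else 0)" using ab by (simp add: sum.delta)
  finally show ?thesis .
qed

lemma mult_delta_left:
  fixes X Y :: "'a::comm_ring_1 mat"
  assumes X: "X \<in> carrier_mat n n" and Y: "Y \<in> carrier_mat n n" and n2: "2 \<le> n"
    and d: "\<And>a c. a < n \<Longrightarrow> 2 \<le> c \<Longrightarrow> c < n \<Longrightarrow> X $$ (a,c) = (if a = c then 1 else 0)"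
    and ab: "a < n" "b < n"
  shows "(X*Y)$$(a,b) = X$$(a,0)*Y$$(0,b) + X$$(a,1)*Y$$(1,b) + (if 2 \<le> a then Y$$(a,b) else 0)"
proof -
  have "(X*Y)$$(a,b) = (\<Sum>c\<in>{0..<n}. X$$(a,c) * Y$$(c,b))"
    using X Y ab by (simp add: index_mult_mat scalar_prod_def)
  also have "\<dots> = X$$(a,0)*Y$$(0,b) + X$$(a,1)*Y$$(1,b) + (\<Sum>c\<in>{2..<n}. X$$(a,c) * Y$$(c,b))"
    by (rule sum_split2[OF n2])
  also have "(\<Sum>c\<in>{2..<n}. X$$(a,c) * Y$$(c,b)) = (\<Sum>c\<in>{2..<n}. if a = c then Y$$(c,b) else 0)"
    by (rule sum.cong, auto simp: d ab)
  also have "\<dots> = (if 2 \<le> a then Y$$(a,b) else 0)" using ab by (simp add: sum.delta)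
  finally show ?thesis .
qed

lemma char_poly_single: "char_poly (mat 1 1 (\<lambda>_. (l::complex))) = [:-l, 1:]"
  unfolding char_poly_defs
  by (subst det_single, auto)

theorem mainTheorem4:
  fixes k r :: nat
    and p p' :: "nat \<Rightarrow> real"
    and eps eps' :: "nat \<Rightarrow> nat \<Rightarrow> real"
  assumes "1 \<le> k" and "k < r"
    and "sv_threshold_weights k r eps"
    and "sv_threshold_weights (k + 1) r eps'"
    and "p k = p (k + 1)"
    and "\<And>j. k + 1 < j \<Longrightarrow> j \<le> r \<Longrightarrow> even j \<Longrightarrow> eps k j = eps (k + 1) j"
    and "\<And>i. k + 2 \<le> i \<Longrightarrow> i \<le> r \<Longrightarrow> p' i = p i"
    and "p' (k + 1) = p k + (if even (k + 1) then eps k (k + 1) else 0)"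
    and "\<And>i j. k + 1 < i \<Longrightarrow> i < j \<Longrightarrow> j \<le> r \<Longrightarrow> even j \<Longrightarrow> eps' i j = eps i j"
    and "\<And>j. k + 1 < j \<Longrightarrow> j \<le> r \<Longrightarrow> even j \<Longrightarrow> eps' (k + 1) j = sqrt 2 * eps (k + 1) j"
  shows "Spec (sv_threshold_mat k r p eps) =
           Spec (sv_threshold_mat (k + 1) r p' eps')
           + {# complex_of_real (p k - (if even (k + 1) then eps k (k + 1) else 0)) #}"
proof -
  define m where "m = r - k"
  define n where "n = Suc m"
  have n2: "2 \<le> n" using assms(2) unfolding n_def m_def by auto
  have rn: "r = k + m" using assms(2) unfolding m_def by auto
  define e where "e = (if even (k + 1) then eps k (k + 1) else 0)"
  define lam where "lam = complex_of_real (p k - e)"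
  define A where "A = map_mat complex_of_real (sv_threshold_mat k r p eps)"
  define A' where "A' = map_mat complex_of_real (sv_threshold_mat (k+1) r p' eps')"
  have Ac: "A \<in> carrier_mat n n" unfolding A_def sv_threshold_mat_def n_def m_def
    using assms(2) by auto
  have A'c: "A' \<in> carrier_mat m m" unfolding A'_def sv_threshold_mat_def m_def
    using assms(2) by auto
  have Aent: "A $$ (a,b) = complex_of_real (if a=b then p(k+a) else if even (max (k+a) (k+b)) then eps (min (k+a) (k+b)) (max (k+a) (k+b)) else 0)"
    if "a < n" "b < n" for a b
    using that unfolding A_def sv_threshold_mat_def n_def m_def using assms(2) by (auto simp: Let_def)
  have A'ent: "A' $$ (a,b) = complex_of_real (if a=b then p'(k+1+a) else if even (max (k+1+a) (k+1+b)) then eps' (min (k+1+a) (k+1+b)) (max (k+1+a) (k+1+b)) else 0)"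
    if "a < m" "b < m" for a b
    using that unfolding A'_def sv_threshold_mat_def m_def using assms(2) by (auto simp: Let_def)
  define B where "B = four_block_mat (mat 1 1 (\<lambda>_. lam)) (0\<^sub>m 1 m) (0\<^sub>m m 1) A'"
  have Bc: "B \<in> carrier_mat n n" unfolding B_def n_def using A'c by auto
  have Bent: "B $$ (a,b) = (if a = 0 then (if b = 0 then lam else 0) else if b = 0 then 0 else A' $$ (a-1,b-1))"
    if "a < n" "b < n" for a b
    using that A'c unfolding B_def n_def by (auto simp: index_mat_four_block)
  define s where "s = complex_of_real (sqrt 2) / 2"
  have r2: "complex_of_real (sqrt 2) * complex_of_real (sqrt 2) = 2"
    by (simp flip: of_real_mult)
  have s1: "s * complex_of_real (sqrt 2) = 1" unfolding s_def using r2 by simp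
  have s2: "2 * s = complex_of_real (sqrt 2)" unfolding s_def by simp
  have s3: "s * s + s * s = 1" unfolding s_def using r2 by (simp add: field_simps)
  have s4: "s * x + s * y = s * (x + y)" for x y by (simp add: algebra_simps)
  define Q where "Q = mat n n (\<lambda>(a,b). if a < 2 \<and> b < 2 then (if a = 1 \<and> b = 0 then -s else s) else if a = b then 1 else 0)"
  define Qt where "Qt = mat n n (\<lambda>(a,b). if a < 2 \<and> b < 2 then (if a = 0 \<and> b = 1 then -s else s) else if a = b then 1 else 0)"
  have Qc: "Q \<in> carrier_mat n n" and Qtc: "Qt \<in> carrier_mat n n" unfolding Q_def Qt_def by auto
  have Qent: "Q $$ (a,b) = (if a < 2 \<and> b < 2 then (if a = 1 \<and> b = 0 then -s else s) else if a = b then 1 else 0)"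
    if "a < n" "b < n" for a b using that unfolding Q_def by auto
  have Qtent: "Qt $$ (a,b) = (if a < 2 \<and> b < 2 then (if a = 0 \<and> b = 1 then -s else s) else if a = b then 1 else 0)"
    if "a < n" "b < n" for a b using that unfolding Qt_def by auto
  have Qd1: "Q $$ (a,c) = (if a = c then 1 else 0)" if "a < n" "2 \<le> c" "c < n" for a c
    using that by (simp add: Qent)
  have Qd2: "Q $$ (c,b) = (if c = b then 1 else 0)" if "2 \<le> c" "c < n" "b < n" for c b
    using that by (simp add: Qent)
  have Qtd1: "Qt $$ (a,c) = (if a = c then 1 else 0)" if "a < n" "2 \<le> c" "c < n" for a c
    using that by (simp add: Qtent)
  have cases3: "a = 0 \<or> a = 1 \<or> 2 \<le> a" for a :: nat by auto
  have one0: "0 < n" "1 < n" using n2 by auto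
  have QQt: "Q * Qt = 1\<^sub>m n"
  proof (rule eq_matI)
    fix a b assume ab: "a < dim_row (1\<^sub>m n)" "b < dim_col (1\<^sub>m n)"
    hence ab: "a < n" "b < n" by auto
    have e1: "(Q * Qt) $$ (a, b) = Q$$(a,0)*Qt$$(0,b) + Q$$(a,1)*Qt$$(1,b) + (if 2 \<le> a then Qt$$(a,b) else 0)"
      by (rule mult_delta_left[OF Qc Qtc n2 Qd1 ab])
    show "(Q * Qt) $$ (a, b) = 1\<^sub>m n $$ (a, b)"
      unfolding e1 using cases3[of a] cases3[of b] ab one0 s3
      by (auto simp: Qent Qtent)
  qed (use Qc Qtc in auto)
  have QtQ: "Qt * Q = 1\<^sub>m n"
  proof (rule eq_matI)
    fix a b assume ab: "a < dim_row (1\<^sub>m n)" "b < dim_col (1\<^sub>m n)"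
    hence ab: "a < n" "b < n" by auto
    have e1: "(Qt * Q) $$ (a, b) = Qt$$(a,0)*Q$$(0,b) + Qt$$(a,1)*Q$$(1,b) + (if 2 \<le> a then Q$$(a,b) else 0)"
      by (rule mult_delta_left[OF Qtc Qc n2 Qtd1 ab])
    show "(Qt * Q) $$ (a, b) = 1\<^sub>m n $$ (a, b)"
      unfolding e1 using cases3[of a] cases3[of b] ab one0 s3
      by (auto simp: Qent Qtent)
  qed (use Qc Qtc in auto)
  note h5 = assms(5)[simplified] and h6 = assms(6)[simplified] and h7 = assms(7)[simplified]
    and h8 = assms(8)[simplified] and h9 = assms(9)[simplified] and h10 = assms(10)[simplified]
  have s5: "s * (complex_of_real (sqrt 2) * x) = x" for x using s1 by (simp add: mult.assoc[symmetric])
  have s6: "x * s + x * s = complex_of_real (sqrt 2) * x" for x using s2 by (simp add: algebra_simps)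
  have s7: "s * x + s * x = complex_of_real (sqrt 2) * x" for x using s2 by (simp add: algebra_simps)
  have AQ: "A * Q = Q * B"
  proof (rule eq_matI)
    fix a b assume ab: "a < dim_row (Q * B)" "b < dim_col (Q * B)"
    hence ab: "a < n" "b < n" using Qc Bc by auto
    have e1: "(A * Q) $$ (a, b) = A$$(a,0)*Q$$(0,b) + A$$(a,1)*Q$$(1,b) + (if 2 \<le> b then A$$(a,b) else 0)"
      by (rule mult_delta_right[OF Ac Qc n2 Qd2 ab])
    have e2: "(Q * B) $$ (a, b) = Q$$(a,0)*B$$(0,b) + Q$$(a,1)*B$$(1,b) + (if 2 \<le> a then B$$(a,b) else 0)"
      by (rule mult_delta_left[OF Qc Bc n2 Qd1 ab])
    show "(A * Q) $$ (a, b) = (Q * B) $$ (a, b)"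
      unfolding e1 e2 using cases3[of a] cases3[of b] ab one0
      apply (elim disjE)
      apply (simp_all add: Qent Bent Aent A'ent lam_def e_def n_def rn h5 h6 h7 h8 h9 h10 s5 s6 s7 algebra_simps)
      apply (intro conjI impI; simp)
      done
  qed (use Qc Ac Bc in auto)
  have AQB: "A = Q * B * Qt"
  proof -
    have "A = A * (Q * Qt)" using Ac by (simp add: QQt)
    also have "\<dots> = (A * Q) * Qt" using Ac Qc Qtc by (simp add: assoc_mult_mat)
    finally show ?thesis by (simp add: AQ)
  qed
  have dA: "dim_row A = n" using Ac by simp
  have wit: "similar_mat_wit A B Q Qt"
    unfolding similar_mat_wit_def Let_def dA
    by (intro conjI) (use Ac Bc Qc Qtc QQt QtQ AQB in auto)
  have "similar_mat A B"
    unfolding similar_mat_def using wit by blast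
  hence cpAB: "char_poly A = char_poly B" by (rule char_poly_similar)
  have cpB: "char_poly B = [:-lam, 1:] * char_poly A'"
    unfolding B_def
    using A'c by (subst char_poly_four_block_zeros_col) (auto simp: char_poly_single[simplified])
  have nz: "char_poly A' \<noteq> 0"
    using degree_monic_char_poly[OF A'c] by auto
  have "Spec (sv_threshold_mat k r p eps) = proots (char_poly A)" unfolding Spec_def A_def ..
  also have "\<dots> = proots ([:-lam, 1:] * char_poly A')" by (simp add: cpAB cpB)
  also have "\<dots> = {#lam#} + proots (char_poly A')"
    using nz by (subst proots_mult, auto)
  finally show ?thesis unfolding Spec_def A'_def lam_def e_def by (simp add: add.commute)
qed

end
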